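(* Let $E$ be an acyclic directed graph and let $G(E)$ be a dense subsemigroup of a topological semigroup $S$. Then $s^2=0$ for every element $s\in S$ which is not an idempotent.
   Context: All spaces are Hausdorff. A directed graph $E=(E^0,E^1,r,s)$ has vertices $E^0$, edges $E^1$, source/range maps $s,r:E^1\to E^0$; paths are vertices and sequences of edges $e_1\ldots e_n$ with $r(e_i)=s(e_{i+1})$; a cycle is a path of non-zero length with equal source and range; acyclic means no cycles. The graph inverse semigroup $G(E)$ is the semigroup with zero $0$ generated by $E^0$, $E^1$, $E^{-1}=\{e^{-1}\mid e\in E^1\}$ subject to: for $a,b\in E^0$, $e,f\in E^1$: $ab=a$ if $a=b$, else $0$; $s(e)e=er(e)=e$; $e^{-1}s(e)=r(e)e^{-1}=e^{-1}$; $e^{-1}f=r(e)$ if $e=f$, else $0$. *)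

theory Defs
  imports "HOL-Analysis.Analysis" "HOL-Library.Sublist"
begin

definition digraph :: "'v set \<Rightarrow> 'e set \<Rightarrow> ('e \<Rightarrow> 'v) \<Rightarrow> ('e \<Rightarrow> 'v) \<Rightarrow> bool" where
  "digraph V Ed src rng \<longleftrightarrow> (\<forall>e\<in>Ed. src e \<in> V \<and> rng e \<in> V)"

text \<open>A path is represented as a pair (v, es) of its source vertex v and its list of
  edges es.  If es = [] it is the vertex v (a path of length zero); otherwise
  v = s(first edge) and consecutive edges satisfy r(e_i) = s(e_{i+1}).\<close>

type_synonym ('v,'e) gpath = "'v \<times> 'e list"

definition is_path :: "'v set \<Rightarrow> 'e set \<Rightarrow> ('e \<Rightarrow> 'v) \<Rightarrow> ('e \<Rightarrow> 'v) \<Rightarrow> ('v,'e) gpath \<Rightarrow> bool" where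
  "is_path V Ed src rng p \<longleftrightarrow>
     fst p \<in> V \<and> set (snd p) \<subseteq> Ed \<and>
     (snd p \<noteq> [] \<longrightarrow> src (hd (snd p)) = fst p) \<and>
     (\<forall>i. Suc i < length (snd p) \<longrightarrow> rng (snd p ! i) = src (snd p ! Suc i))"

definition path_rng :: "('e \<Rightarrow> 'v) \<Rightarrow> ('v,'e) gpath \<Rightarrow> 'v" where
  "path_rng rng p = (if snd p = [] then fst p else rng (last (snd p)))"

definition acyclic_graph :: "'v set \<Rightarrow> 'e set \<Rightarrow> ('e \<Rightarrow> 'v) \<Rightarrow> ('e \<Rightarrow> 'v) \<Rightarrow> bool" where
  "acyclic_graph V Ed src rng \<longleftrightarrow>
     \<not> (\<exists>p. is_path V Ed src rng p \<and> snd p \<noteq> [] \<and> path_rng rng p = fst p)"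

text \<open>The graph inverse semigroup G(E), in its standard normal form:
  None is the zero 0, and Some (a, b) with r(a) = r(b) stands for a b^{-1}.
  Multiplication: (a b^{-1})(c d^{-1}) = a p d^{-1} if c = b p,
  = a (d p)^{-1} if b = c p, and 0 otherwise.\<close>

type_synonym ('v,'e) gis = "(('v,'e) gpath \<times> ('v,'e) gpath) option"

definition gis_carrier :: "'v set \<Rightarrow> 'e set \<Rightarrow> ('e \<Rightarrow> 'v) \<Rightarrow> ('e \<Rightarrow> 'v) \<Rightarrow> ('v,'e) gis set" where
  "gis_carrier V Ed src rng =
     insert None {Some (a, b) | a b. is_path V Ed src rng a \<and> is_path V Ed src rng b
                                     \<and> path_rng rng a = path_rng rng b}"

fun gis_mult :: "('v,'e) gis \<Rightarrow> ('v,'e) gis \<Rightarrow> ('v,'e) gis" where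
  "gis_mult None y = None"
| "gis_mult (Some _) None = None"
| "gis_mult (Some (a, b)) (Some (c, d)) =
     (if fst b = fst c \<and> prefix (snd b) (snd c)
      then Some ((fst a, snd a @ drop (length (snd b)) (snd c)), d)
      else if fst b = fst c \<and> prefix (snd c) (snd b)
      then Some (a, (fst d, snd d @ drop (length (snd c)) (snd b)))
      else None)"

end

theory Submission
  imports Defs
begin

lemma suffix_path:
  assumes g: "digraph V Ed src rng" and P: "is_path V Ed src rng (v, l @ p)" and np: "p \<noteq> []"
  shows "is_path V Ed src rng (path_rng rng (v,l), p) \<and>
         path_rng rng (path_rng rng (v,l), p) = path_rng rng (v, l @ p)"
proof -
  from P have v: "v \<in> V" and E: "set l \<subseteq> Ed" "set p \<subseteq> Ed"
    and h: "l @ p \<noteq> [] \<longrightarrow> src (hd (l @ p)) = v"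
    and c: "\<And>i. Suc i < length (l @ p) \<Longrightarrow> rng ((l @ p) ! i) = src ((l @ p) ! Suc i)"
    by (auto simp: is_path_def)
  have V1: "path_rng rng (v,l) \<in> V"
  proof (cases "l = []")
    case True then show ?thesis using v by (simp add: path_rng_def)
  next
    case False then have "last l \<in> Ed" using E by auto
    then show ?thesis using g False by (auto simp: path_rng_def digraph_def)
  qed
  have hd: "src (hd p) = path_rng rng (v,l)"
  proof (cases "l = []")
    case True then show ?thesis using h np by (simp add: path_rng_def)
  next
    case False
    have "Suc (length l - 1) < length (l @ p)" using False np by simp
    from c[OF this] False have "rng (last l) = src (hd p)"
      by (simp add: nth_append last_conv_nth hd_conv_nth np)
    then show ?thesis using False by (simp add: path_rng_def)
  qed
  have cc: "\<forall>i. Suc i < length p \<longrightarrow> rng (p ! i) = src (p ! Suc i)"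
  proof (intro allI impI)
    fix i assume "Suc i < length p"
    then have "Suc (length l + i) < length (l @ p)" by simp
    from c[OF this] show "rng (p ! i) = src (p ! Suc i)"
      by (simp add: nth_append flip: add_Suc_right)
  qed
  show ?thesis using V1 E hd cc np by (simp add: is_path_def path_rng_def)
qed

lemma sq_cases:
  assumes g: "digraph V Ed src rng" and ac: "acyclic_graph V Ed src rng"
    and x: "x \<in> gis_carrier V Ed src rng"
  shows "gis_mult x x = x \<or> gis_mult x x = None"
proof (cases x)
  case None then show ?thesis by simp
next
  case (Some ab)
  then obtain a b where xab: "x = Some (a, b)" by (cases ab) auto
  obtain va la vb lb where ab: "a = (va, la)" "b = (vb, lb)" by fastforce
  from x xab ab have pa: "is_path V Ed src rng (va, la)" and pb: "is_path V Ed src rng (vb, lb)"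
    and r: "path_rng rng (va, la) = path_rng rng (vb, lb)"
    by (auto simp: gis_carrier_def)
  have nocyc: "\<And>q. is_path V Ed src rng q \<Longrightarrow> snd q \<noteq> [] \<Longrightarrow> path_rng rng q \<noteq> fst q"
    using ac unfolding acyclic_graph_def by blast
  show ?thesis
  proof (cases "vb = va \<and> prefix lb la")
    case True
    then obtain p where la: "la = lb @ p" by (auto simp: prefix_def)
    show ?thesis
    proof (cases "p = []")
      case True then show ?thesis using xab ab la by simp
    next
      case False
      have "is_path V Ed src rng (vb, lb @ p)" using pa la True by simp
      from suffix_path[OF g this False] have "False"
        using nocyc[of "(path_rng rng (vb, lb), p)"] r la True False by auto
      then show ?thesis ..
    qed
  next
    case nt: False
    show ?thesis
    proof (cases "vb = va \<and> prefix la lb")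
      case True
      then obtain p where lb: "lb = la @ p" by (auto simp: prefix_def)
      show ?thesis
      proof (cases "p = []")
        case True then show ?thesis using xab ab lb by simp
      next
        case False
        have "is_path V Ed src rng (va, la @ p)" using pb lb True by simp
        from suffix_path[OF g this False] have "False"
          using nocyc[of "(path_rng rng (va, la), p)"] r lb True False by auto
        then show ?thesis ..
      qed
    next
      case False then show ?thesis using nt xab ab by auto
    qed
  qed
qed

theorem lemma4p2:
  fixes V :: "'v set" and Ed :: "'e set" and src rng :: "'e \<Rightarrow> 'v"
    and h :: "('v,'e) gis \<Rightarrow> 'b::{t2_space, semigroup_mult}"
  assumes graph: "digraph V Ed src rng"
    and acyc: "acyclic_graph V Ed src rng"
    and cont_mult: "continuous_on UNIV (\<lambda>p::'b \<times> 'b. fst p * snd p)"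
    and inj: "inj_on h (gis_carrier V Ed src rng)"
    and hom: "\<forall>x\<in>gis_carrier V Ed src rng. \<forall>y\<in>gis_carrier V Ed src rng.
                h (gis_mult x y) = h x * h y"
    and dense: "closure (h ` gis_carrier V Ed src rng) = UNIV"
  shows "\<forall>s::'b. s * s \<noteq> s \<longrightarrow> s * s = h None"
proof -
  have sq: "continuous_on UNIV (\<lambda>s::'b. s * s)"
  proof -
    have "continuous_on UNIV (\<lambda>s::'b. (s, s))"
      by (intro continuous_intros)
    from continuous_on_compose[OF this continuous_on_subset[OF cont_mult]]
    show ?thesis by (simp add: o_def)
  qed
  let ?A = "{s::'b. s * s = s} \<union> {s. s * s = h None}"
  have "closed ?A"
    by (intro closed_Un closed_Collect_eq sq continuous_intros)
  moreover have "h ` gis_carrier V Ed src rng \<subseteq> ?A"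
  proof
    fix y assume "y \<in> h ` gis_carrier V Ed src rng"
    then obtain x where x: "x \<in> gis_carrier V Ed src rng" and y: "y = h x" by auto
    have "h x * h x = h (gis_mult x x)" using hom x by simp
    with sq_cases[OF graph acyc x] y show "y \<in> ?A" by auto
  qed
  ultimately have "closure (h ` gis_carrier V Ed src rng) \<subseteq> ?A"
    by (simp add: closure_minimal)
  with dense show ?thesis by auto
qed

end
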